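(* Let $\mathfrak{g}=\mathfrak{s}(\mathfrak{g})\oplus\mathfrak{c}(\mathfrak{g})$ be a compact Lie algebra, where $\mathfrak{s}(\mathfrak{g})=[\mathfrak{g},\mathfrak{g}]$ is its semisimple part and $\mathfrak{c}(\mathfrak{g})$ its center, let $\mathfrak{h}$ be a Lie subalgebra of $\mathfrak{g}$ with semisimple part $\mathfrak{s}(\mathfrak{h})=[\mathfrak{h},\mathfrak{h}]$, and let $\phi$ be a finite-dimensional faithful and semisimple complex representation of $\mathfrak{g}$. If $\dim(\mathrm{com}[(\phi\otimes\phi)|_{\mathfrak{h}}])=\dim(\mathrm{com}[\phi\otimes\phi])$, then $\mathfrak{s}(\mathfrak{h})=\mathfrak{s}(\mathfrak{g})$.
   Context: Representations are finite-dimensional complex matrix representations; semisimple means completely reducible. $(\phi\otimes\phi)(g)=\phi(g)\otimes\mathbb 1+\mathbb 1\otimes\phi(g)$. $\mathrm{com}[\psi]$ is the space of complex matrices commuting with all $\psi(g)$; $|_{\mathfrak{h}}$ denotes restriction. *)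

theory Defs
  imports "HOL-Analysis.Analysis"
begin

text \<open>Lie algebras are modelled on a whole real vector space type 'g with bracket br.\<close>

definition lie_algebra :: "('g::real_vector \<Rightarrow> 'g \<Rightarrow> 'g) \<Rightarrow> bool" where
  "lie_algebra br \<longleftrightarrow> bilinear br \<and> (\<forall>x. br x x = 0) \<and>
     (\<forall>x y z. br x (br y z) + br y (br z x) + br z (br x y) = 0)"

definition finite_dim_space :: "'g::real_vector itself \<Rightarrow> bool" where
  "finite_dim_space _ \<longleftrightarrow> (\<exists>B::'g set. finite B \<and> span B = UNIV)"

definition compact_lie_algebra :: "('g::real_vector \<Rightarrow> 'g \<Rightarrow> 'g) \<Rightarrow> bool" where
  "compact_lie_algebra br \<longleftrightarrow> lie_algebra br \<and> finite_dim_space TYPE('g) \<and>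
     (\<exists>B :: 'g \<Rightarrow> 'g \<Rightarrow> real. bilinear B \<and> (\<forall>x y. B x y = B y x) \<and>
        (\<forall>x. x \<noteq> 0 \<longrightarrow> B x x > 0) \<and>
        (\<forall>x y z. B (br x y) z + B y (br x z) = 0))"

definition lie_subalgebra :: "('g::real_vector \<Rightarrow> 'g \<Rightarrow> 'g) \<Rightarrow> 'g set \<Rightarrow> bool" where
  "lie_subalgebra br H \<longleftrightarrow> subspace H \<and> (\<forall>x\<in>H. \<forall>y\<in>H. br x y \<in> H)"

definition derived :: "('g::real_vector \<Rightarrow> 'g \<Rightarrow> 'g) \<Rightarrow> 'g set \<Rightarrow> 'g set" where
  "derived br H = span {br x y | x y. x \<in> H \<and> y \<in> H}"

definition mat_comm :: "complex^'n^'n \<Rightarrow> complex^'n^'n \<Rightarrow> complex^'n^'n" where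
  "mat_comm A B = A ** B - B ** A"

definition lie_rep :: "('g::real_vector \<Rightarrow> 'g \<Rightarrow> 'g) \<Rightarrow> ('g \<Rightarrow> complex^'n^'n) \<Rightarrow> bool" where
  "lie_rep br \<phi> \<longleftrightarrow> linear \<phi> \<and> (\<forall>x y. \<phi> (br x y) = mat_comm (\<phi> x) (\<phi> y))"

definition faithful :: "('g \<Rightarrow> complex^'n^'n) \<Rightarrow> bool" where
  "faithful \<phi> \<longleftrightarrow> inj \<phi>"

definition csubspace :: "(complex^'n) set \<Rightarrow> bool" where
  "csubspace W \<longleftrightarrow> 0 \<in> W \<and> (\<forall>v\<in>W. \<forall>w\<in>W. v + w \<in> W) \<and> (\<forall>c. \<forall>v\<in>W. c *s v \<in> W)"

definition invariant_subspace :: "('g \<Rightarrow> complex^'n^'n) \<Rightarrow> (complex^'n) set \<Rightarrow> bool" where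
  "invariant_subspace \<phi> W \<longleftrightarrow> csubspace W \<and> (\<forall>x. \<forall>v\<in>W. \<phi> x *v v \<in> W)"

definition semisimple_rep :: "('g \<Rightarrow> complex^'n^'n) \<Rightarrow> bool" where
  "semisimple_rep \<phi> \<longleftrightarrow> (\<forall>W. invariant_subspace \<phi> W \<longrightarrow>
     (\<exists>U. invariant_subspace \<phi> U \<and> W \<inter> U = {0} \<and> {w + u | w u. w \<in> W \<and> u \<in> U} = UNIV))"

definition kron :: "complex^'n^'n \<Rightarrow> complex^'m^'m \<Rightarrow> complex^('n \<times> 'm)^('n \<times> 'm)" where
  "kron A B = (\<chi> p q. A $ fst p $ fst q * B $ snd p $ snd q)"

definition tensor_rep :: "('g \<Rightarrow> complex^'n^'n) \<Rightarrow> 'g \<Rightarrow> complex^('n \<times> 'n)^('n \<times> 'n)" where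
  "tensor_rep \<phi> x = kron (\<phi> x) (mat 1) + kron (mat 1) (\<phi> x)"

definition com :: "('g \<Rightarrow> complex^'k^'k) \<Rightarrow> 'g set \<Rightarrow> (complex^'k^'k) set" where
  "com \<psi> S = {M. \<forall>x\<in>S. M ** \<psi> x = \<psi> x ** M}"

definition cscale :: "complex \<Rightarrow> complex^'k^'k \<Rightarrow> complex^'k^'k" where
  "cscale c M = (\<chi> i j. c * M $ i $ j)"

definition cdim :: "(complex^'k^'k) set \<Rightarrow> nat" where
  "cdim S = vector_space.dim cscale S"

end

theory Submission
  imports Defs
begin

lemma cscale_nth[simp]: "cscale c M $ i $ j = c * M $ i $ j"
  by (simp add: cscale_def)

lemma vs_cscale: "vector_space (cscale :: complex \<Rightarrow> complex^'k^'k \<Rightarrow> _)"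
  by unfold_locales (auto simp: vec_eq_iff algebra_simps)

definition Eu :: "'k \<Rightarrow> 'k \<Rightarrow> complex^'k^'k" where
  "Eu a b = (\<chi> i j. if i = a \<and> j = b then 1 else 0)"

definition cbasis :: "(complex^'k::finite^'k) set" where
  "cbasis = (\<lambda>(a,b). Eu a b) ` UNIV"

lemma fdvs_cscale: "finite_dimensional_vector_space (cscale :: complex \<Rightarrow> complex^'k::finite^'k \<Rightarrow> _) cbasis"
proof -
  interpret vector_space "cscale :: complex \<Rightarrow> complex^'k::finite^'k \<Rightarrow> _" by (rule vs_cscale)
  show ?thesis
  proof (unfold_locales)
    show "finite (cbasis :: (complex^'k::finite^'k) set)" by (simp add: cbasis_def)
    show "\<not> dependent (cbasis :: (complex^'k::finite^'k) set)"
    proof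
      assume "dependent (cbasis :: (complex^'k::finite^'k) set)"
      then obtain t and u :: "complex^'k^'k \<Rightarrow> complex" where t: "finite t" "t \<subseteq> cbasis" "(\<Sum>v\<in>t. cscale (u v) v) = 0" and v: "\<exists>v\<in>t. u v \<noteq> 0"
        unfolding dependent_explicit by blast
      from v obtain v where vt: "v \<in> t" and uv: "u v \<noteq> 0" by blast
      from vt t(2) obtain a b where vab: "v = Eu a b" unfolding cbasis_def by auto
      have "(\<Sum>w\<in>t. cscale (u w) w) $ a $ b = (\<Sum>w\<in>t. u w * w $ a $ b)" by simp
      also have "\<dots> = (\<Sum>w\<in>t. if w = v then u w else 0)"
      proof (rule sum.cong[OF refl])
        fix w assume "w \<in> t"
        then obtain c d where wcd: "w = Eu c d" using t(2) unfolding cbasis_def by auto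
        show "u w * w $ a $ b = (if w = v then u w else 0)"
        proof (cases "c = a \<and> d = b")
          case True then show ?thesis using wcd vab by (simp add: Eu_def)
        next
          case False
          then have "w \<noteq> v" using wcd vab by (auto simp: Eu_def vec_eq_iff)
          then show ?thesis using wcd False by (auto simp: Eu_def)
        qed
      qed
      also have "\<dots> = u v" using vt t(1) by simp
      finally show False using t(3) uv by simp
    qed
    show "span (cbasis :: (complex^'k::finite^'k) set) = UNIV"
    proof (rule set_eqI, rule iffI)
      fix M :: "complex^'k^'k"
      have "M = (\<Sum>p\<in>UNIV. cscale (M $ fst p $ snd p) (Eu (fst p) (snd p)))"
      proof -
        have "\<And>i j. (\<Sum>p\<in>UNIV. M $ fst p $ snd p * (if i = fst p \<and> j = snd p then 1 else 0)) = M $ i $ j"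
        proof -
          fix i j
          have "(\<Sum>p\<in>UNIV. M $ fst p $ snd p * (if i = fst p \<and> j = snd p then 1 else 0))
             = (\<Sum>p\<in>UNIV. if p = (i,j) then M $ i $ j else 0)"
            by (rule sum.cong) auto
          then show "?thesis i j" by simp
        qed
        then show ?thesis by (simp add: vec_eq_iff Eu_def)
      qed
      moreover have "(\<Sum>p\<in>UNIV. cscale (M $ fst p $ snd p) (Eu (fst p) (snd p))) \<in> span cbasis"
        by (intro span_sum span_scale span_base) (auto simp: cbasis_def)
      ultimately show "M \<in> span cbasis" by simp
    qed simp
  qed
qed


lemma kron_nth: "kron A B $ p $ q = A $ fst p $ fst q * B $ snd p $ snd q"
  by (simp add: kron_def)

lemma kron_mult: "kron A B ** kron C D = kron (A ** C) (B ** D)"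
proof -
  have "(\<Sum>p\<in>UNIV. A $ i $ fst p * B $ k $ snd p * (C $ fst p $ j * D $ snd p $ l))
      = (\<Sum>p\<in>UNIV. A $ i $ p * C $ p $ j) * (\<Sum>q\<in>UNIV. B $ k $ q * D $ q $ l)" for i j k l
  proof -
    have "(\<Sum>p\<in>UNIV. A $ i $ p * C $ p $ j) * (\<Sum>q\<in>UNIV. B $ k $ q * D $ q $ l)
        = (\<Sum>p\<in>UNIV. \<Sum>q\<in>UNIV. (A $ i $ p * C $ p $ j) * (B $ k $ q * D $ q $ l))"
      by (simp add: sum_product)
    also have "\<dots> = (\<Sum>p\<in>UNIV \<times> UNIV. (A $ i $ fst p * C $ fst p $ j) * (B $ k $ snd p * D $ snd p $ l))"
      by (simp add: sum.cartesian_product case_prod_beta)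
    also have "\<dots> = (\<Sum>p\<in>UNIV. (A $ i $ fst p * C $ fst p $ j) * (B $ k $ snd p * D $ snd p $ l))"
      by (simp add: UNIV_Times_UNIV)
    finally show ?thesis by (simp add: mult_ac)
  qed
  then show ?thesis
    by (simp add: vec_eq_iff matrix_matrix_mult_def kron_def)
qed

lemma kron_add_left: "kron (A + A') B = kron A B + kron A' B"
  by (simp add: vec_eq_iff kron_def algebra_simps)
lemma kron_add_right: "kron A (B + B') = kron A B + kron A B'"
  by (simp add: vec_eq_iff kron_def algebra_simps)
lemma kron_diff_left: "kron (A - A') B = kron A B - kron A' B"
  by (simp add: vec_eq_iff kron_def algebra_simps)
lemma kron_diff_right: "kron A (B - B') = kron A B - kron A B'"
  by (simp add: vec_eq_iff kron_def algebra_simps)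

lemma matrix_add_rdistrib: "((B::'a::semiring_1^'n^'m) + C) ** A = B ** A + C ** A"
  by (simp add: vec_eq_iff matrix_matrix_mult_def sum.distrib algebra_simps)

lemma matrix_diff_ldistrib: "(A::'a::ring_1^'n^'m) ** (B - C) = A ** B - A ** C"
  by (simp add: vec_eq_iff matrix_matrix_mult_def sum_subtractf algebra_simps)
lemma matrix_diff_rdistrib: "((B::'a::ring_1^'n^'m) - C) ** A = B ** A - C ** A"
  by (simp add: vec_eq_iff matrix_matrix_mult_def sum_subtractf algebra_simps)

lemma matrix_sum_rdistrib: "(\<Sum>e\<in>S. f e) ** (A::'a::ring_1^'n^'m) = (\<Sum>e\<in>S. f e ** A)"
  by (induction S rule: infinite_finite_induct) (auto simp: matrix_add_rdistrib)
lemma matrix_sum_ldistrib: "(A::'a::ring_1^'n^'m) ** (\<Sum>e\<in>S. f e) = (\<Sum>e\<in>S. A ** f e)"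
  by (induction S rule: infinite_finite_induct) (auto simp: matrix_add_ldistrib)

lemma tensor_comm:
  "tensor_rep \<phi> x ** kron P Q - kron P Q ** tensor_rep \<phi> x
     = kron (mat_comm (\<phi> x) P) Q + kron P (mat_comm (\<phi> x) Q)"
  by (simp add: tensor_rep_def matrix_add_ldistrib matrix_add_rdistrib kron_mult mat_comm_def
      kron_diff_left kron_diff_right)

lemma com_iff: "M \<in> com \<psi> S \<longleftrightarrow> (\<forall>x\<in>S. \<psi> x ** M - M ** \<psi> x = 0)"
  by (auto simp: com_def)


definition orthonormal :: "('g \<Rightarrow> 'g \<Rightarrow> real) \<Rightarrow> 'g set \<Rightarrow> bool" where
  "orthonormal Bf E \<longleftrightarrow> (\<forall>e\<in>E. Bf e e = 1) \<and> (\<forall>e\<in>E. \<forall>e'\<in>E. e \<noteq> e' \<longrightarrow> Bf e e' = 0)"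

locale ipsetup =
  fixes Bf :: "'g::real_vector \<Rightarrow> 'g \<Rightarrow> real"
  assumes Bbil: "bilinear Bf" and Bsym: "Bf x y = Bf y x" and Bpos: "x \<noteq> 0 \<Longrightarrow> Bf x x > 0"
begin

lemma lin1: "linear (\<lambda>x. Bf x y)" using Bbil unfolding bilinear_def by auto
lemma lin2: "linear (\<lambda>y. Bf x y)" using Bbil unfolding bilinear_def by auto

lemma B_sum1: "Bf (\<Sum>e\<in>S. f e) y = (\<Sum>e\<in>S. Bf (f e) y)"
  by (simp add: linear_sum[OF lin1] o_def)
lemma B_sum2: "Bf y (\<Sum>e\<in>S. f e) = (\<Sum>e\<in>S. Bf y (f e))"
  by (simp add: linear_sum[OF lin2] o_def)
lemma B_scale1: "Bf (c *\<^sub>R x) y = c * Bf x y" using bilinear_lmul[OF Bbil] by simp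
lemma B_scale2: "Bf y (c *\<^sub>R x) = c * Bf y x" using bilinear_rmul[OF Bbil] by simp
lemma B_add1: "Bf (x + z) y = Bf x y + Bf z y" using bilinear_ladd[OF Bbil] by simp
lemma B_add2: "Bf y (x + z) = Bf y x + Bf y z" using bilinear_radd[OF Bbil] by simp
lemma B_diff1: "Bf (x - z) y = Bf x y - Bf z y" using bilinear_lsub[OF Bbil] by simp
lemma B_diff2: "Bf y (x - z) = Bf y x - Bf y z" using bilinear_rsub[OF Bbil] by simp
lemma B_zero1[simp]: "Bf 0 y = 0" using bilinear_lzero[OF Bbil] by simp
lemma B_zero2[simp]: "Bf y 0 = 0" using bilinear_rzero[OF Bbil] by simp

lemma B_self_zero: "Bf x x = 0 \<longleftrightarrow> x = 0"
  using Bpos by force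

lemma B_nonneg: "Bf x x \<ge> 0"
  using Bpos[of x] by (cases "x = 0") auto

lemma coeff_sum:
  assumes E: "orthonormal Bf E" "finite E" and e0: "e0 \<in> E"
  shows "Bf (\<Sum>e\<in>E. c e *\<^sub>R e) e0 = c e0"
proof -
  have "Bf (\<Sum>e\<in>E. c e *\<^sub>R e) e0 = (\<Sum>e\<in>E. c e * Bf e e0)"
    by (simp add: B_sum1 B_scale1)
  also have "\<dots> = (\<Sum>e\<in>E. if e = e0 then c e0 else 0)"
    by (rule sum.cong) (use E e0 in \<open>auto simp: orthonormal_def\<close>)
  also have "\<dots> = c e0" using E e0 by simp
  finally show ?thesis .
qed

lemma expand:
  assumes E: "orthonormal Bf E" "finite E" and x: "x \<in> span E"
  shows "x = (\<Sum>e\<in>E. Bf x e *\<^sub>R e)"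
proof -
  from x E(2) obtain c where xc: "x = (\<Sum>e\<in>E. c e *\<^sub>R e)"
    by (auto simp: span_finite)
  have "Bf x e = c e" if "e \<in> E" for e using coeff_sum[OF E that] xc by simp
  then have "(\<Sum>e\<in>E. Bf x e *\<^sub>R e) = (\<Sum>e\<in>E. c e *\<^sub>R e)"
    by (intro sum.cong) simp_all
  then show ?thesis using xc by simp
qed

lemma proj_orth:
  assumes E: "orthonormal Bf E" "finite E" and e0: "e0 \<in> E"
  shows "Bf (x - (\<Sum>e\<in>E. Bf x e *\<^sub>R e)) e0 = 0"
  using coeff_sum[OF E e0, of "\<lambda>e. Bf x e"] by (simp add: B_diff1)

lemma proj_orth_span:
  assumes E: "orthonormal Bf E" "finite E" and h: "h \<in> span E"
  shows "Bf (x - (\<Sum>e\<in>E. Bf x e *\<^sub>R e)) h = 0"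
proof -
  define p where "p = x - (\<Sum>e\<in>E. Bf x e *\<^sub>R e)"
  have hh: "h = (\<Sum>e\<in>E. Bf h e *\<^sub>R e)" by (rule expand[OF E h])
  have "Bf p h = Bf p (\<Sum>e\<in>E. Bf h e *\<^sub>R e)" using hh by (rule arg_cong)
  also have "\<dots> = (\<Sum>e\<in>E. Bf h e * Bf p e)" by (simp add: B_sum2 B_scale2)
  finally have "Bf (x - (\<Sum>e\<in>E. Bf x e *\<^sub>R e)) h
     = (\<Sum>e\<in>E. Bf h e * Bf (x - (\<Sum>e\<in>E. Bf x e *\<^sub>R e)) e)" unfolding p_def .
  also have "\<dots> = 0" using proj_orth[OF E] by simp
  finally show ?thesis .
qed

lemma gram_schmidt:
  assumes "finite S"
  shows "\<exists>E. finite E \<and> orthonormal Bf E \<and> span E = span S"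
  using assms
proof (induction S rule: finite_induct)
  case empty
  then show ?case by (intro exI[of _ "{}"]) (auto simp: orthonormal_def)
next
  case (insert x S)
  then obtain E where E: "finite E" "orthonormal Bf E" "span E = span S" by blast
  define x' where "x' = x - (\<Sum>e\<in>E. Bf x e *\<^sub>R e)"
  have sumE: "(\<Sum>e\<in>E. Bf x e *\<^sub>R e) \<in> span E"
    by (intro span_sum span_scale span_base)
  have spins: "span (insert x S) = span (insert x E)"
    using E(3) by (simp add: span_insert)
  show ?case
  proof (cases "x' = 0")
    case True
    then have "x \<in> span E" using sumE by (simp add: x'_def)
    then have "span (insert x E) = span E"
      by (simp add: span_redundant)
    then show ?thesis using E spins by auto
  next
    case False
    define e' where "e' = (1 / sqrt (Bf x' x')) *\<^sub>R x'"
    have pos: "Bf x' x' > 0" using Bpos[OF False] .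
    have ee: "Bf e' e' = 1"
    proof -
      have "Bf e' e' = (1 / sqrt (Bf x' x')) * ((1 / sqrt (Bf x' x')) * Bf x' x')"
        by (simp add: e'_def B_scale1 B_scale2)
      also have "\<dots> = Bf x' x' / (sqrt (Bf x' x') * sqrt (Bf x' x'))" by simp
      also have "sqrt (Bf x' x') * sqrt (Bf x' x') = Bf x' x'"
        using pos by (simp add: real_sqrt_mult[symmetric])
      finally show ?thesis using pos by simp
    qed
    have orth: "Bf e' e = 0" if "e \<in> E" for e
      using proj_orth[OF E(2) E(1) that, of x] by (simp add: e'_def x'_def B_scale1)
    have notin: "e' \<notin> E" using orth ee by force
    have on: "orthonormal Bf (insert e' E)"
      unfolding orthonormal_def
    proof (intro conjI ballI impI)
      fix e assume "e \<in> insert e' E" then show "Bf e e = 1"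
        using E(2) ee unfolding orthonormal_def by auto
    next
      fix e f assume "e \<in> insert e' E" "f \<in> insert e' E" "e \<noteq> f"
      then show "Bf e f = 0"
        using E(2) orth Bsym[of e f] unfolding orthonormal_def by auto
    qed
    have x_eq: "x = sqrt (Bf x' x') *\<^sub>R e' + (\<Sum>e\<in>E. Bf x e *\<^sub>R e)"
    proof -
      have "sqrt (Bf x' x') *\<^sub>R e' = (sqrt (Bf x' x') * (1 / sqrt (Bf x' x'))) *\<^sub>R x'"
        unfolding e'_def by simp
      also have "sqrt (Bf x' x') * (1 / sqrt (Bf x' x')) = 1" using pos by simp
      finally have "sqrt (Bf x' x') *\<^sub>R e' = x'" by simp
      then show ?thesis unfolding x'_def by simp
    qed
    have s1: "x \<in> span (insert e' E)"
      apply (subst x_eq)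
      apply (intro span_add span_scale span_sum span_base)
      by auto
    have s2: "e' \<in> span (insert x E)"
      unfolding e'_def x'_def
      apply (intro span_scale span_diff span_sum span_base)
      by auto
    have i1: "insert e' E \<subseteq> span (insert x E)" using s2 span_superset[of "insert x E"] by blast
    have i2: "insert x E \<subseteq> span (insert e' E)" using s1 span_superset[of "insert e' E"] by blast
    have "span (insert e' E) = span (insert x E)"
      using span_minimal[OF i1 subspace_span] span_minimal[OF i2 subspace_span] by (rule antisym)
    then have sp: "span (insert e' E) = span (insert x S)" using spins by simp
    have fi: "finite (insert e' E)" using E(1) by simp
    show ?thesis by (rule exI[of _ "insert e' E"]) (intro conjI fi on sp)
  qed
qed

end


locale liesetup = ipsetup Bf for Bf :: "'g::real_vector \<Rightarrow> 'g \<Rightarrow> real" +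
  fixes br :: "'g \<Rightarrow> 'g \<Rightarrow> 'g" and \<phi> :: "'g \<Rightarrow> complex^'n::finite^'n" and Eg :: "'g set"
  assumes brbil: "bilinear br" and alt: "br x x = 0"
  and Binv: "Bf (br x y) z + Bf y (br x z) = 0"
  and lin: "linear \<phi>" and hom: "\<phi> (br x y) = mat_comm (\<phi> x) (\<phi> y)" and inj: "inj \<phi>"
  and Eg: "finite Eg" "orthonormal Bf Eg" "span Eg = UNIV"
begin

lemma br_add1: "br (x + z) y = br x y + br z y" using bilinear_ladd[OF brbil] by simp
lemma br_add2: "br y (x + z) = br y x + br y z" using bilinear_radd[OF brbil] by simp
lemma br_scale1: "br (c *\<^sub>R x) y = c *\<^sub>R br x y" using bilinear_lmul[OF brbil] by simp
lemma br_scale2: "br y (c *\<^sub>R x) = c *\<^sub>R br y x" using bilinear_rmul[OF brbil] by simp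
lemma br_zero1[simp]: "br 0 y = 0" using bilinear_lzero[OF brbil] by simp
lemma br_zero2[simp]: "br y 0 = 0" using bilinear_rzero[OF brbil] by simp
lemma br_diff1: "br (x - z) y = br x y - br z y" using bilinear_lsub[OF brbil] by simp
lemma br_diff2: "br y (x - z) = br y x - br y z" using bilinear_rsub[OF brbil] by simp
lemma br_neg1: "br (- x) y = - br x y" using bilinear_lneg[OF brbil] by simp
lemma br_sum1: "br (\<Sum>e\<in>S. f e) y = (\<Sum>e\<in>S. br (f e) y)"
proof -
  have l: "linear (\<lambda>x. br x y)" using brbil unfolding bilinear_def by auto
  show ?thesis by (simp add: linear_sum[OF l] o_def)
qed
lemma br_sum2: "br y (\<Sum>e\<in>S. f e) = (\<Sum>e\<in>S. br y (f e))"
proof -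
  have l: "linear (\<lambda>x. br y x)" using brbil unfolding bilinear_def by auto
  show ?thesis by (simp add: linear_sum[OF l] o_def)
qed

lemma br_antisym: "br x y = - br y x"
proof -
  have "br (x + y) (x + y) = 0" by (rule alt)
  then have "br x x + br x y + br y x + br y y = 0" by (simp add: br_add1 br_add2 algebra_simps)
  then show ?thesis by (simp add: alt eq_neg_iff_add_eq_0)
qed

lemma phi_zero[simp]: "\<phi> 0 = 0" using linear_0[OF lin] .

lemma phi_nth_scale: "\<phi> (c *\<^sub>R x) $ i $ j = of_real c * \<phi> x $ i $ j"
proof -
  have "\<phi> (c *\<^sub>R x) $ i $ j = c *\<^sub>R (\<phi> x $ i $ j)" using linear_scale[OF lin, of c x] by simp
  then show ?thesis by (simp add: scaleR_conv_of_real)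
qed
lemma phi_nth_add: "\<phi> (x + y) $ i $ j = \<phi> x $ i $ j + \<phi> y $ i $ j"
  using linear_add[OF lin, of x y] by simp
lemma phi_nth_neg: "\<phi> (- x) $ i $ j = - \<phi> x $ i $ j"
  using linear_neg[OF lin, of x] by simp
lemma phi_nth_diff: "\<phi> (x - y) $ i $ j = \<phi> x $ i $ j - \<phi> y $ i $ j"
  using linear_diff[OF lin, of x y] by simp
lemma phi_nth_sum: "\<phi> (\<Sum>e\<in>S. f e) $ i $ j = (\<Sum>e\<in>S. \<phi> (f e) $ i $ j)"
  using linear_sum[OF lin, of f S] by (simp add: o_def)

lemma phi_nth_br: "\<phi> (br a b) $ i $ j = (\<Sum>k\<in>UNIV. \<phi> a $ i $ k * \<phi> b $ k $ j - \<phi> b $ i $ k * \<phi> a $ k $ j)"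
  by (simp add: hom mat_comm_def matrix_matrix_mult_def sum_subtractf)

lemma phi_eqI: "(\<And>i j. \<phi> x $ i $ j = \<phi> y $ i $ j) \<Longrightarrow> x = y"
  using inj unfolding inj_def by (metis vec_eq_iff)

lemma K1:
  assumes "\<And>i j. \<phi> w $ i $ j = \<i> * \<phi> u $ i $ j"
  shows "\<phi> (br a w) $ i $ j = \<i> * \<phi> (br a u) $ i $ j"
  by (simp add: phi_nth_br assms sum_distrib_left algebra_simps)

lemma K2:
  assumes "\<And>i j. \<phi> w $ i $ j = \<i> * \<phi> u $ i $ j"
  shows "\<phi> (br w a) $ i $ j = \<i> * \<phi> (br u a) $ i $ j"
  by (simp add: phi_nth_br assms sum_distrib_left algebra_simps)

definition N :: "'g \<Rightarrow> real" where "N x = (\<Sum>e\<in>Eg. Bf (br x e) (br x e))"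

lemma N_nonneg: "N x \<ge> 0" unfolding N_def by (intro sum_nonneg B_nonneg)

lemma N_alt: "N x = - (\<Sum>e\<in>Eg. Bf (br x (br x e)) e)"
proof -
  have "Bf (br x (br x e)) e = - Bf (br x e) (br x e)" for e
    using Binv[of x "br x e" e] by simp
  then show ?thesis unfolding N_def by (simp add: sum_negf)
qed

lemma N_zero_central: assumes "N x = 0" shows "br x z = 0"
proof -
  have "\<forall>e\<in>Eg. Bf (br x e) (br x e) = 0"
    using assms Eg(1) unfolding N_def by (subst (asm) sum_nonneg_eq_0_iff) (auto intro: B_nonneg)
  then have z: "\<forall>e\<in>Eg. br x e = 0" using B_self_zero by auto
  have "z = (\<Sum>e\<in>Eg. Bf z e *\<^sub>R e)" using expand[OF Eg(2) Eg(1)] Eg(3) by auto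
  then have "br x z = br x (\<Sum>e\<in>Eg. Bf z e *\<^sub>R e)" by (rule arg_cong)
  also have "\<dots> = 0" using z by (simp add: br_sum2 br_scale2)
  finally show ?thesis .
qed

lemma central_i:
  assumes hy: "\<And>i j. \<phi> y $ i $ j = \<i> * \<phi> x $ i $ j"
  shows "br x z = 0" and "br y z = 0"
proof -
  have yy: "br y (br y w) = - br x (br x w)" for w
  proof (rule phi_eqI)
    fix i j
    have a: "\<phi> (br y w) $ i $ j = \<i> * \<phi> (br x w) $ i $ j" for i j by (rule K2[OF hy])
    have "\<phi> (br y (br y w)) $ i $ j = \<i> * \<phi> (br x (br y w)) $ i $ j" by (rule K2[OF hy])
    also have "\<phi> (br x (br y w)) $ i $ j = \<i> * \<phi> (br x (br x w)) $ i $ j" by (rule K1[OF a])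
    finally show "\<phi> (br y (br y w)) $ i $ j = \<phi> (- br x (br x w)) $ i $ j"
      by (simp add: phi_nth_neg)
  qed
  have "N y = - N x" unfolding N_alt yy using bilinear_lneg[OF Bbil] by (simp add: sum_negf)
  then have "N x = 0" "N y = 0" using N_nonneg[of x] N_nonneg[of y] by linarith+
  then show "br x z = 0" "br y z = 0" using N_zero_central by auto
qed

end

lemma kron_zero_left[simp]: "kron 0 Q = 0" by (simp add: vec_eq_iff kron_def)
lemma kron_zero_right[simp]: "kron P 0 = 0" by (simp add: vec_eq_iff kron_def)

lemma rank_one:
  assumes eq: "kron C A + kron A C = 0" and A: "A \<noteq> 0"
  shows "C = 0"
proof -
  from A obtain k l where kl: "A $ k $ l \<noteq> 0" by (metis vec_eq_iff zero_index)
  have e: "C $ a $ b * A $ c $ d + A $ a $ b * C $ c $ d = 0" for a b c d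
    using arg_cong[OF eq, of "\<lambda>M. M $ (a, c) $ (b, d)"] by (simp add: kron_def)
  have "C $ k $ l = 0" using e[of k l k l] kl by (simp add: mult.commute)
  then have "C $ i $ j = 0" for i j using e[of i j k l] kl by simp
  then show ?thesis by (simp add: vec_eq_iff)
qed

definition lamX :: "(complex^'n^'n \<Rightarrow> real) \<Rightarrow> 'n \<Rightarrow> 'n \<Rightarrow> complex" where
  "lamX F k l = of_real (F (Eu k l)) - \<i> * of_real (F (cscale \<i> (Eu k l)))"

lemma lamX_re:
  fixes F :: "complex^'n::finite^'n \<Rightarrow> real"
  assumes F: "linear F"
  shows "Re (\<Sum>k\<in>UNIV. \<Sum>l\<in>UNIV. lamX F k l * v $ k $ l) = F v"
proof -
  have v: "v = (\<Sum>k\<in>UNIV. \<Sum>l\<in>UNIV. Re (v $ k $ l) *\<^sub>R Eu k l + Im (v $ k $ l) *\<^sub>R cscale \<i> (Eu k l))"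
  proof -
    have "(\<Sum>k\<in>UNIV. \<Sum>l\<in>UNIV. Re (v $ k $ l) *\<^sub>R (if i = k \<and> j = l then 1 else 0)
            + Im (v $ k $ l) *\<^sub>R (\<i> * (if i = k \<and> j = l then 1 else 0))) = v $ i $ j" for i j
    proof -
      have inner: "(\<Sum>l\<in>UNIV. Re (v $ k $ l) *\<^sub>R (if i = k \<and> j = l then 1 else 0)
            + Im (v $ k $ l) *\<^sub>R (\<i> * (if i = k \<and> j = l then 1 else 0)))
          = (if k = i then Re (v $ i $ j) *\<^sub>R 1 + Im (v $ i $ j) *\<^sub>R \<i> else 0)" for k
      proof (cases "k = i")
        case True
        have "(\<Sum>l\<in>UNIV. Re (v $ k $ l) *\<^sub>R (if i = k \<and> j = l then 1 else 0)
            + Im (v $ k $ l) *\<^sub>R (\<i> * (if i = k \<and> j = l then 1 else 0)))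
           = (\<Sum>l\<in>UNIV. if l = j then Re (v $ i $ j) *\<^sub>R 1 + Im (v $ i $ j) *\<^sub>R \<i> else 0)"
          by (rule sum.cong) (auto simp: True)
        then show ?thesis using True by simp
      qed simp
      have "(\<Sum>k\<in>UNIV. \<Sum>l\<in>UNIV. Re (v $ k $ l) *\<^sub>R (if i = k \<and> j = l then 1 else 0)
            + Im (v $ k $ l) *\<^sub>R (\<i> * (if i = k \<and> j = l then 1 else 0)))
          = (\<Sum>k\<in>UNIV. if k = i then Re (v $ i $ j) *\<^sub>R 1 + Im (v $ i $ j) *\<^sub>R \<i> else 0)"
        by (simp only: inner)
      also have "\<dots> = Re (v $ i $ j) *\<^sub>R 1 + Im (v $ i $ j) *\<^sub>R \<i>" by simp
      also have "\<dots> = v $ i $ j" by (simp add: complex_eq_iff)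
      finally show ?thesis .
    qed
    then show ?thesis by (simp add: vec_eq_iff Eu_def)
  qed
  have "F v = (\<Sum>k\<in>UNIV. \<Sum>l\<in>UNIV. Re (v $ k $ l) * F (Eu k l) + Im (v $ k $ l) * F (cscale \<i> (Eu k l)))"
    by (subst v) (simp add: linear_sum[OF F] o_def linear_add[OF F] linear_scale[OF F])
  also have "\<dots> = Re (\<Sum>k\<in>UNIV. \<Sum>l\<in>UNIV. lamX F k l * v $ k $ l)"
    by (simp add: Re_sum lamX_def algebra_simps)
  finally show ?thesis by simp
qed


lemma sum3_swap:
  fixes a :: "'k \<Rightarrow> 'l \<Rightarrow> complex"
  shows "(\<Sum>k\<in>K. \<Sum>l\<in>L. a k l * (\<Sum>e\<in>S. f e k l)) = (\<Sum>e\<in>S. \<Sum>k\<in>K. \<Sum>l\<in>L. a k l * f e k l)"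
proof -
  have "(\<Sum>k\<in>K. \<Sum>l\<in>L. a k l * (\<Sum>e\<in>S. f e k l)) = (\<Sum>k\<in>K. \<Sum>l\<in>L. \<Sum>e\<in>S. a k l * f e k l)"
    by (simp add: sum_distrib_left)
  also have "\<dots> = (\<Sum>k\<in>K. \<Sum>e\<in>S. \<Sum>l\<in>L. a k l * f e k l)"
    by (rule sum.cong[OF refl]) (rule sum.swap)
  also have "\<dots> = (\<Sum>e\<in>S. \<Sum>k\<in>K. \<Sum>l\<in>L. a k l * f e k l)"
    by (rule sum.swap)
  finally show ?thesis .
qed

locale hsetup = liesetup Bf br \<phi> Eg
  for Bf :: "'g::real_vector \<Rightarrow> 'g \<Rightarrow> real" and br and \<phi> :: "'g \<Rightarrow> complex^'n::finite^'n" and Eg +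
  fixes H :: "'g set" and EH :: "'g set"
  assumes Hcl: "\<And>x y. x \<in> H \<Longrightarrow> y \<in> H \<Longrightarrow> br x y \<in> H"
  and EH: "finite EH" "orthonormal Bf EH" "span EH = H"
  and comeq: "com (tensor_rep \<phi>) H = com (tensor_rep \<phi>) UNIV"
begin

lemma phi_inj0: "\<phi> u = 0 \<Longrightarrow> u = 0"
  using inj phi_zero unfolding inj_def by metis

lemma centralizer:
  assumes "\<And>h. h \<in> H \<Longrightarrow> br h u = 0"
  shows "br x u = 0"
proof -
  let ?M = "kron (\<phi> u) (\<phi> u)"
  have "?M \<in> com (tensor_rep \<phi>) H"
    unfolding com_iff tensor_comm using assms by (simp add: hom[symmetric])
  then have "?M \<in> com (tensor_rep \<phi>) UNIV" using comeq by simp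
  then have eq: "kron (\<phi> (br x u)) (\<phi> u) + kron (\<phi> u) (\<phi> (br x u)) = 0"
    unfolding com_iff tensor_comm by (simp add: hom[symmetric])
  show ?thesis
  proof (cases "u = 0")
    case True then show ?thesis by simp
  next
    case False
    then have "\<phi> u \<noteq> 0" using phi_inj0 by blast
    then have "\<phi> (br x u) = 0" using rank_one[OF eq] by blast
    then show ?thesis by (rule phi_inj0)
  qed
qed

definition Cas where "Cas = (\<Sum>e\<in>EH. kron (\<phi> e) (\<phi> e))"

lemma cas_comm:
  "tensor_rep \<phi> x ** Cas - Cas ** tensor_rep \<phi> x
     = (\<Sum>e\<in>EH. kron (\<phi> (br x e)) (\<phi> e) + kron (\<phi> e) (\<phi> (br x e)))"
proof -
  have "tensor_rep \<phi> x ** Cas - Cas ** tensor_rep \<phi> x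
     = (\<Sum>e\<in>EH. tensor_rep \<phi> x ** kron (\<phi> e) (\<phi> e) - kron (\<phi> e) (\<phi> e) ** tensor_rep \<phi> x)"
    unfolding Cas_def matrix_sum_ldistrib matrix_sum_rdistrib sum_subtractf ..
  also have "\<dots> = (\<Sum>e\<in>EH. kron (mat_comm (\<phi> x) (\<phi> e)) (\<phi> e) + kron (\<phi> e) (mat_comm (\<phi> x) (\<phi> e)))"
    unfolding tensor_comm ..
  also have "\<dots> = (\<Sum>e\<in>EH. kron (\<phi> (br x e)) (\<phi> e) + kron (\<phi> e) (\<phi> (br x e)))"
    unfolding hom ..
  finally show ?thesis .
qed

lemma cas_entry:
  "(\<Sum>e\<in>EH. kron (\<phi> (br x e)) (\<phi> e) + kron (\<phi> e) (\<phi> (br x e))) $ (i, k) $ (j, l)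
     = (\<Sum>e\<in>EH. \<phi> (br x e) $ i $ j * \<phi> e $ k $ l + \<phi> e $ i $ j * \<phi> (br x e) $ k $ l)"
  by (simp add: kron_def)

lemma EH_H: "e \<in> EH \<Longrightarrow> e \<in> H" using EH(3) span_base by blast

lemma cas_H:
  assumes h: "h \<in> H"
  shows "(\<Sum>e\<in>EH. \<phi> (br h e) $ i $ j * \<phi> e $ k $ l + \<phi> e $ i $ j * \<phi> (br h e) $ k $ l) = 0"
proof -
  define c where "c e e' = Bf (br h e) e'" for e e'
  have exp: "br h e = (\<Sum>e'\<in>EH. c e e' *\<^sub>R e')" if "e \<in> EH" for e
    unfolding c_def using expand[OF EH(2) EH(1)] Hcl[OF h EH_H[OF that]] EH(3) by auto
  have anti: "c e e' = - c e' e" for e e'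
    using Binv[of h e e'] Bsym[of e "br h e'"] unfolding c_def by linarith
  have T1: "(\<Sum>e\<in>EH. \<phi> (br h e) $ i $ j * \<phi> e $ k $ l)
      = (\<Sum>e\<in>EH. \<Sum>e'\<in>EH. of_real (c e e') * (\<phi> e' $ i $ j * \<phi> e $ k $ l))"
  proof (rule sum.cong[OF refl])
    fix e assume "e \<in> EH"
    then have "\<phi> (br h e) $ i $ j = (\<Sum>e'\<in>EH. of_real (c e e') * \<phi> e' $ i $ j)"
      by (subst exp) (simp_all add: phi_nth_sum phi_nth_scale)
    then show "\<phi> (br h e) $ i $ j * \<phi> e $ k $ l = (\<Sum>e'\<in>EH. of_real (c e e') * (\<phi> e' $ i $ j * \<phi> e $ k $ l))"
      by (simp add: sum_distrib_right mult.assoc)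
  qed
  have T2: "(\<Sum>e\<in>EH. \<phi> e $ i $ j * \<phi> (br h e) $ k $ l)
      = (\<Sum>e\<in>EH. \<Sum>e'\<in>EH. of_real (c e e') * (\<phi> e $ i $ j * \<phi> e' $ k $ l))"
  proof (rule sum.cong[OF refl])
    fix e assume "e \<in> EH"
    then have "\<phi> (br h e) $ k $ l = (\<Sum>e'\<in>EH. of_real (c e e') * \<phi> e' $ k $ l)"
      by (subst exp) (simp_all add: phi_nth_sum phi_nth_scale)
    then show "\<phi> e $ i $ j * \<phi> (br h e) $ k $ l = (\<Sum>e'\<in>EH. of_real (c e e') * (\<phi> e $ i $ j * \<phi> e' $ k $ l))"
      by (simp add: sum_distrib_left mult_ac)
  qed
  have "(\<Sum>e\<in>EH. \<Sum>e'\<in>EH. of_real (c e e') * (\<phi> e $ i $ j * \<phi> e' $ k $ l))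
      = (\<Sum>e'\<in>EH. \<Sum>e\<in>EH. of_real (c e e') * (\<phi> e $ i $ j * \<phi> e' $ k $ l))"
    by (rule sum.swap)
  also have "\<dots> = (\<Sum>e'\<in>EH. \<Sum>e\<in>EH. - (of_real (c e' e) * (\<phi> e $ i $ j * \<phi> e' $ k $ l)))"
    by (intro sum.cong refl) (subst anti, simp)
  also have "\<dots> = - (\<Sum>e\<in>EH. \<Sum>e'\<in>EH. of_real (c e e') * (\<phi> e' $ i $ j * \<phi> e $ k $ l))"
    by (simp add: sum_negf)
  finally have "(\<Sum>e\<in>EH. \<phi> e $ i $ j * \<phi> (br h e) $ k $ l) = - (\<Sum>e\<in>EH. \<phi> (br h e) $ i $ j * \<phi> e $ k $ l)"
    using T1 T2 by simp
  then show ?thesis by (simp add: sum.distrib)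
qed

lemma cas_in_com: "Cas \<in> com (tensor_rep \<phi>) H"
  unfolding com_iff
proof (intro ballI)
  fix h assume h: "h \<in> H"
  show "tensor_rep \<phi> h ** Cas - Cas ** tensor_rep \<phi> h = 0"
    unfolding cas_comm
  proof (subst vec_eq_iff, intro allI)
    fix p :: "'n \<times> 'n"
    obtain i k where p: "p = (i, k)" by fastforce
    show "(\<Sum>e\<in>EH. kron (\<phi> (br h e)) (\<phi> e) + kron (\<phi> e) (\<phi> (br h e))) $ p = 0 $ p"
    proof (subst vec_eq_iff, intro allI)
      fix q :: "'n \<times> 'n"
      obtain j l where q: "q = (j, l)" by fastforce
      show "(\<Sum>e\<in>EH. kron (\<phi> (br h e)) (\<phi> e) + kron (\<phi> e) (\<phi> (br h e))) $ p $ q = 0 $ p $ q"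
        unfolding p q cas_entry using cas_H[OF h] by simp
    qed
  qed
qed

lemma ident_y:
  "(\<Sum>e\<in>EH. \<phi> (br y e) $ i $ j * \<phi> e $ k $ l + \<phi> e $ i $ j * \<phi> (br y e) $ k $ l) = 0"
proof -
  have "Cas \<in> com (tensor_rep \<phi>) UNIV" using cas_in_com comeq by simp
  then have "tensor_rep \<phi> y ** Cas - Cas ** tensor_rep \<phi> y = 0" unfolding com_iff by simp
  then have "(\<Sum>e\<in>EH. kron (\<phi> (br y e)) (\<phi> e) + kron (\<phi> e) (\<phi> (br y e))) $ (i, k) $ (j, l) = 0"
    unfolding cas_comm by simp
  then show ?thesis unfolding cas_entry .
qed

end

context hsetup begin

lemma perp_comm:
  assumes y: "\<And>h'. h' \<in> H \<Longrightarrow> Bf y h' = 0" and h: "h \<in> H"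
  shows "br y h = 0"
proof -
  obtain \<psi> where \<psi>: "linear \<psi>" "\<psi> \<circ> \<phi> = id" using linear_injective_left_inverse[OF lin inj] by blast
  define F where "F v = Bf (\<psi> v) h" for v
  have linF: "linear F" unfolding F_def using linear_compose[OF \<psi>(1) lin1] by (simp add: o_def)
  have Fphi: "F (\<phi> a) = Bf a h" for a using \<psi>(2) unfolding F_def by (metis comp_apply id_apply)
  define Lam where "Lam v = (\<Sum>k\<in>UNIV. \<Sum>l\<in>UNIV. lamX F k l * v $ k $ l)" for v :: "complex^'n^'n"
  define G where "G a = Im (Lam (\<phi> a))" for a
  have LamE: "Lam (\<phi> a) = of_real (Bf a h) + \<i> * of_real (G a)" for a
  proof -
    have "Re (Lam (\<phi> a)) = Bf a h" using lamX_re[OF linF, of "\<phi> a"] unfolding Lam_def Fphi .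
    then show ?thesis unfolding G_def by (simp add: complex_eq_iff)
  qed
  have zero: "(\<Sum>e\<in>EH. \<phi> (br y e) $ i $ j * Lam (\<phi> e) + \<phi> e $ i $ j * Lam (\<phi> (br y e))) = 0" for i j
  proof -
    have "0 = (\<Sum>k\<in>UNIV. \<Sum>l\<in>UNIV. lamX F k l * (\<Sum>e\<in>EH. \<phi> (br y e) $ i $ j * \<phi> e $ k $ l + \<phi> e $ i $ j * \<phi> (br y e) $ k $ l))"
      by (simp add: ident_y)
    also have "\<dots> = (\<Sum>e\<in>EH. \<Sum>k\<in>UNIV. \<Sum>l\<in>UNIV. lamX F k l * (\<phi> (br y e) $ i $ j * \<phi> e $ k $ l + \<phi> e $ i $ j * \<phi> (br y e) $ k $ l))"
      by (rule sum3_swap)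
    also have "\<dots> = (\<Sum>e\<in>EH. \<phi> (br y e) $ i $ j * Lam (\<phi> e) + \<phi> e $ i $ j * Lam (\<phi> (br y e)))"
      unfolding Lam_def by (simp add: algebra_simps sum.distrib sum_distrib_left)
    finally show ?thesis by simp
  qed
  define A1 where "A1 = (\<Sum>e\<in>EH. Bf e h *\<^sub>R br y e + Bf (br y e) h *\<^sub>R e)"
  define A2 where "A2 = (\<Sum>e\<in>EH. G e *\<^sub>R br y e + G (br y e) *\<^sub>R e)"
  have hyp: "\<phi> A1 $ i $ j = \<i> * \<phi> (- A2) $ i $ j" for i j
  proof -
    have "\<phi> A1 $ i $ j + \<i> * \<phi> A2 $ i $ j = (\<Sum>e\<in>EH. \<phi> (br y e) $ i $ j * Lam (\<phi> e) + \<phi> e $ i $ j * Lam (\<phi> (br y e)))"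
      unfolding A1_def A2_def LamE
      by (simp add: phi_nth_sum phi_nth_add phi_nth_scale sum_distrib_left sum.distrib algebra_simps)
    then have "\<phi> A1 $ i $ j + \<i> * \<phi> A2 $ i $ j = 0" using zero[of i j] by simp
    then show ?thesis by (simp add: phi_nth_neg eq_neg_iff_add_eq_0)
  qed
  have A1c: "br A1 z = 0" for z using central_i(2)[OF hyp] .
  have ortho: "Bf (br y e) h = 0" if "e \<in> EH" for e
  proof -
    have "Bf (br h y) e = 0" using Binv[of h y e] y[OF Hcl[OF h EH_H[OF that]]] by simp
    then have "Bf (br y h) e = 0" using br_antisym[of y h] bilinear_lneg[OF Bbil] by simp
    then show ?thesis using Binv[of y e h] Bsym[of e "br y h"] by simp
  qed
  have "A1 = (\<Sum>e\<in>EH. Bf e h *\<^sub>R br y e)" unfolding A1_def using ortho by (intro sum.cong) auto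
  also have "\<dots> = (\<Sum>e\<in>EH. Bf h e *\<^sub>R br y e)" by (intro sum.cong refl) (simp add: Bsym[of _ h])
  also have "\<dots> = br y (\<Sum>e\<in>EH. Bf h e *\<^sub>R e)" by (simp add: br_sum2 br_scale2)
  also have "(\<Sum>e\<in>EH. Bf h e *\<^sub>R e) = h" using expand[OF EH(2) EH(1)] h EH(3) by auto
  finally have A1e: "A1 = br y h" .
  define z where "z = br y h"
  have "br y z = 0" using A1c[of y] br_antisym[of y z] unfolding A1e z_def by simp
  then have "Bf z z = 0" using Binv[of y h z] unfolding z_def by simp
  then show ?thesis using B_self_zero unfolding z_def by simp
qed

lemma proj_in_H: "(\<Sum>e\<in>EH. Bf x e *\<^sub>R e) \<in> H"
  unfolding EH(3)[symmetric] by (intro span_sum span_scale span_base)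

lemma rest_central: "br z (x - (\<Sum>e\<in>EH. Bf x e *\<^sub>R e)) = 0"
proof (rule centralizer)
  fix h assume h: "h \<in> H"
  have "br (x - (\<Sum>e\<in>EH. Bf x e *\<^sub>R e)) h = 0"
  proof (rule perp_comm[OF _ h])
    fix h' assume "h' \<in> H"
    then show "Bf (x - (\<Sum>e\<in>EH. Bf x e *\<^sub>R e)) h' = 0"
      using proj_orth_span[OF EH(2) EH(1)] EH(3) by simp
  qed
  then show "br h (x - (\<Sum>e\<in>EH. Bf x e *\<^sub>R e)) = 0" using br_antisym[of h "x - (\<Sum>e\<in>EH. Bf x e *\<^sub>R e)"] by simp
qed

lemma derived_eq: "derived br H = derived br UNIV"
proof
  show "derived br H \<subseteq> derived br UNIV" unfolding derived_def by (rule span_mono) auto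
  have "{br x y |x y. x \<in> UNIV \<and> y \<in> UNIV} \<subseteq> {br x y |x y. x \<in> H \<and> y \<in> H}"
  proof clarify
    fix a b
    define pa where "pa = (\<Sum>e\<in>EH. Bf a e *\<^sub>R e)"
    define pb where "pb = (\<Sum>e\<in>EH. Bf b e *\<^sub>R e)"
    have ya: "br w (a - pa) = 0" for w unfolding pa_def by (rule rest_central)
    have yb: "br w (b - pb) = 0" for w unfolding pb_def by (rule rest_central)
    have ya': "br (a - pa) w = 0" for w using ya[of w] br_antisym[of "a - pa" w] by simp
    have "br a b = br (pa + (a - pa)) (pb + (b - pb))" by simp
    also have "\<dots> = br pa pb" by (simp only: br_add1 br_add2 ya ya' yb) simp
    finally have "br a b = br pa pb" .
    moreover have "pa \<in> H" "pb \<in> H" unfolding pa_def pb_def by (rule proj_in_H)+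
    ultimately show "\<exists>x y. br a b = br x y \<and> x \<in> H \<and> y \<in> H" by blast
  qed
  then show "derived br UNIV \<subseteq> derived br H"
    unfolding derived_def by (rule span_mono)
qed

end

lemma cscale_mult_left: "cscale c M ** A = cscale c (M ** A)"
  by (simp add: vec_eq_iff matrix_matrix_mult_def sum_distrib_left mult.assoc)
lemma cscale_mult_right: "A ** cscale c M = cscale c (A ** M)"
  by (simp add: vec_eq_iff matrix_matrix_mult_def sum_distrib_left mult_ac)

interpretation cs: finite_dimensional_vector_space "cscale :: complex \<Rightarrow> complex^'k::finite^'k \<Rightarrow> _" cbasis
  by (rule fdvs_cscale)

lemma com_subspace: "cs.subspace (com \<psi> S)"
  unfolding cs.subspace_def com_def
  by (auto simp: matrix_add_ldistrib matrix_add_rdistrib cscale_mult_left cscale_mult_right)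

lemma com_eq_of_cdim:
  assumes "cdim (com \<psi> H) = cdim (com \<psi> UNIV)"
  shows "com \<psi> H = com \<psi> UNIV"
proof -
  have sub: "com \<psi> UNIV \<subseteq> com \<psi> H" by (auto simp: com_def)
  have "cs.dim (com \<psi> H) \<le> cs.dim (com \<psi> UNIV)" using assms unfolding cdim_def by simp
  then have "cs.span (com \<psi> UNIV) = cs.span (com \<psi> H)" by (rule cs.dim_eq_span[OF sub])
  moreover have "cs.span (com \<psi> UNIV) = com \<psi> UNIV" by (rule cs.span_eq_iff[THEN iffD2, OF com_subspace])
  moreover have "cs.span (com \<psi> H) = com \<psi> H" by (rule cs.span_eq_iff[THEN iffD2, OF com_subspace])
  ultimately show ?thesis by simp
qed

theorem theorem9:
  fixes br :: "'g::real_vector \<Rightarrow> 'g \<Rightarrow> 'g"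
    and H :: "'g set"
    and \<phi> :: "'g \<Rightarrow> complex^'n^'n"
  assumes "compact_lie_algebra br"
    and "lie_subalgebra br H"
    and "lie_rep br \<phi>"
    and "faithful \<phi>"
    and "semisimple_rep \<phi>"
    and "cdim (com (tensor_rep \<phi>) H) = cdim (com (tensor_rep \<phi>) UNIV)"
  shows "derived br H = derived br UNIV"
proof -
  have lie: "lie_algebra br" using assms(1) unfolding compact_lie_algebra_def by simp
  have "finite_dim_space TYPE('g)" using assms(1) unfolding compact_lie_algebra_def by simp
  then obtain Bg :: "'g set" where Bg: "finite Bg" "span Bg = UNIV" unfolding finite_dim_space_def by blast
  have "\<exists>B :: 'g \<Rightarrow> 'g \<Rightarrow> real. bilinear B \<and> (\<forall>x y. B x y = B y x) \<and>
        (\<forall>x. x \<noteq> 0 \<longrightarrow> B x x > 0) \<and> (\<forall>x y z. B (br x y) z + B y (br x z) = 0)"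
    using assms(1) unfolding compact_lie_algebra_def by simp
  then obtain Bf :: "'g \<Rightarrow> 'g \<Rightarrow> real" where Bf0: "bilinear Bf \<and> (\<forall>x y. Bf x y = Bf y x) \<and>
        (\<forall>x. x \<noteq> 0 \<longrightarrow> Bf x x > 0) \<and> (\<forall>x y z. Bf (br x y) z + Bf y (br x z) = 0)"
    by (rule exE)
  have Bf: "bilinear Bf" "\<And>x y. Bf x y = Bf y x" "\<And>x. x \<noteq> 0 \<Longrightarrow> Bf x x > 0"
        "\<And>x y z. Bf (br x y) z + Bf y (br x z) = 0"
    using Bf0 by auto
  interpret ip: ipsetup Bf using Bf by unfold_locales auto
  obtain Eg where Eg: "finite Eg" "orthonormal Bf Eg" "span Eg = span Bg"
    using ip.gram_schmidt[OF Bg(1)] by blast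
  from assms(2) have Hs: "subspace H" and Hcl: "\<And>x y. x \<in> H \<Longrightarrow> y \<in> H \<Longrightarrow> br x y \<in> H"
    unfolding lie_subalgebra_def by auto
  obtain b where b: "b \<subseteq> H" "independent b" "H \<subseteq> span b" by (meson basis_exists)
  have fb: "finite b" using independent_span_bound[OF Bg(1) b(2)] Bg(2) by auto
  have spb: "span b = H" using b span_minimal[OF b(1) Hs] by auto
  obtain EH where EH: "finite EH" "orthonormal Bf EH" "span EH = span b"
    using ip.gram_schmidt[OF fb] by blast
  have comeq: "com (tensor_rep \<phi>) H = com (tensor_rep \<phi>) UNIV"
    by (rule com_eq_of_cdim[OF assms(6)])
  have L: "bilinear br" "\<And>x. br x x = 0" using lie unfolding lie_algebra_def by auto
  have R: "linear \<phi>" "\<And>x y. \<phi> (br x y) = mat_comm (\<phi> x) (\<phi> y)" using assms(3) unfolding lie_rep_def by auto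
  have I: "inj \<phi>" using assms(4) unfolding faithful_def .
  have Eg': "span Eg = UNIV" using Eg Bg by auto
  have EH': "span EH = H" using EH spb by auto
  interpret hs: hsetup Bf br \<phi> Eg H EH
    apply unfold_locales
    using Bf L R I Eg Eg' Hcl EH EH' comeq linear_add[OF R(1)] linear_scale[OF R(1)] by auto
  show ?thesis by (rule hs.derived_eq)
qed


end
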